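(* Let $K$ be a convex body in $\mathbb{R}^d$, $G\subset\operatorname{int}(K)$ a convex body, $0<\alpha\le1$, and $G_+:=\{y\in\operatorname{int}(K):\inf_{g\in G}d_K(y,g)\le\alpha\}$. Then for every $x\in\partial G$ there exists $y\in\partial G_+$ with $d_K(x,y)=\alpha$. In particular, $\partial G\subseteq\{z:\inf_{w\in\partial G_+}d_K(z,w)\le\alpha\}$.
   Context: Hilbert distance: for distinct $x,y\in\operatorname{int}(K)$, with $y'$ (resp. $x'$) where the ray from $x$ through $y$ (resp. $y$ through $x$) meets $\partial K$, $d_K(x,y)=\frac12\ln\left(\frac{\|y-x'\|}{\|x-x'\|}\frac{\|x-y'\|}{\|y-y'\|}\right)$, $d_K(x,x)=0$. *)

theory Defs
  imports "HOL-Analysis.Analysis"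
begin

definition convex_body :: "'a::euclidean_space set \<Rightarrow> bool" where
  "convex_body K \<longleftrightarrow> compact K \<and> convex K \<and> interior K \<noteq> {}"

definition ray_exit :: "'a::euclidean_space set \<Rightarrow> 'a \<Rightarrow> 'a \<Rightarrow> 'a" where
  "ray_exit K p q = (THE z. z \<in> frontier K \<and> (\<exists>t::real. t \<ge> 0 \<and> z = p + t *\<^sub>R (q - p)))"

definition hilbert_dist :: "'a::euclidean_space set \<Rightarrow> 'a \<Rightarrow> 'a \<Rightarrow> real" where
  "hilbert_dist K x y =
     (if x = y then 0 else
       (let y' = ray_exit K x y; x' = ray_exit K y x in
          (1/2) * ln ((norm (y - x') / norm (x - x')) * (norm (x - y') / norm (y - y')))))"

definition hilbert_nbhd :: "'a::euclidean_space set \<Rightarrow> 'a set \<Rightarrow> real \<Rightarrow> 'a set" where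
  "hilbert_nbhd K G \<alpha> = {y \<in> interior K. (INF g\<in>G. hilbert_dist K y g) \<le> \<alpha>}"

end

theory Submission
  imports Defs
begin


lemma ray_unique:
  fixes K :: "'a::euclidean_space set"
  assumes cv: "convex K" and p: "p \<in> interior K" and d: "d \<noteq> 0"
    and t1: "t1 \<ge> 0" and t2: "t2 \<ge> 0"
    and f1: "p + t1 *\<^sub>R d \<in> frontier K" and f2: "p + t2 *\<^sub>R d \<in> frontier K"
  shows "t1 = t2"
proof (rule ccontr)
  assume ne: "t1 \<noteq> t2"
  have key: "False" if "0 \<le> s1" "s1 < s2" "p + s1 *\<^sub>R d \<in> frontier K" "p + s2 *\<^sub>R d \<in> frontier K" for s1 s2
  proof (cases "s1 = 0")
    case True
    then show ?thesis using that p by (simp add: frontier_def)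
  next
    case False
    have cl: "p + s2 *\<^sub>R d \<in> closure K" using that frontier_def by auto
    have "p + s1 *\<^sub>R d \<in> open_segment p (p + s2 *\<^sub>R d)"
    proof -
      have s2: "s2 > 0" using that by linarith
      have eq: "p + s1 *\<^sub>R d = (1 - s1/s2) *\<^sub>R p + (s1/s2) *\<^sub>R (p + s2 *\<^sub>R d)"
        using s2 by (simp add: algebra_simps)
      have ne: "p \<noteq> p + s2 *\<^sub>R d" using d s2 by simp
      have "0 < s1/s2" "s1/s2 < 1" using that False s2 by (simp_all add: divide_pos_pos)
      then show ?thesis using eq ne unfolding in_segment(2) by blast
    qed
    then have "p + s1 *\<^sub>R d \<in> interior K"
      using in_interior_closure_convex_segment[OF cv p cl] by blast
    then show ?thesis using that by (simp add: frontier_def)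
  qed
  show False
  proof (cases "t1 < t2")
    case True then show ?thesis using key[OF t1 True f1 f2] by auto
  next
    case False then have "t2 < t1" using ne by auto
    then show ?thesis using key[OF t2 _ f2 f1] by auto
  qed
qed

lemma ray_exists:
  fixes K :: "'a::euclidean_space set"
  assumes cp: "compact K" and cv: "convex K" and p: "p \<in> interior K" and d: "d \<noteq> 0"
  shows "\<exists>\<tau>>0. p + \<tau> *\<^sub>R d \<in> frontier K"
proof -
  define T where "T = {t::real. t \<ge> 0 \<and> p + t *\<^sub>R d \<in> K}"
  have "closed T"
  proof -
    have "T = {0..} \<inter> (\<lambda>t. p + t *\<^sub>R d) -` K" unfolding T_def by auto
    moreover have "closed ((\<lambda>t. p + t *\<^sub>R d) -` K)"
      by (intro closed_vimage compact_imp_closed cp) (intro continuous_intros)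
    ultimately show ?thesis by (auto intro: closed_Int)
  qed
  moreover have "bounded T"
  proof -
    obtain B where B: "\<forall>z\<in>K. norm z \<le> B" using compact_imp_bounded[OF cp] bounded_iff by blast
    have "t \<le> (B + norm p) / norm d" if "t \<in> T" for t
    proof -
      have "norm (t *\<^sub>R d) \<le> norm (p + t *\<^sub>R d) + norm p" by (metis add_diff_cancel_left' norm_triangle_ineq4 add.commute)
      also have "\<dots> \<le> B + norm p" using B that T_def by auto
      finally have "t * norm d \<le> B + norm p" using that T_def by simp
      then show ?thesis using d by (simp add: field_simps)
    qed
    then show ?thesis unfolding bounded_iff using T_def by (intro exI[of _ "(B + norm p) / norm d"]) auto
  qed
  ultimately have "compact T" using compact_eq_bounded_closed by blast
  moreover have "0 \<in> T" using p interior_subset T_def by auto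
  ultimately obtain \<tau> where \<tau>: "\<tau> \<in> T" "\<And>t. t \<in> T \<Longrightarrow> t \<le> \<tau>"
    using compact_attains_sup by (metis empty_iff)
  have notint: "p + \<tau> *\<^sub>R d \<notin> interior K"
  proof
    assume "p + \<tau> *\<^sub>R d \<in> interior K"
    then obtain e where e: "e > 0" "ball (p + \<tau> *\<^sub>R d) e \<subseteq> K" using mem_interior by blast
    define t' where "t' = \<tau> + e / (2 * norm d)"
    have "dist (p + \<tau> *\<^sub>R d) (p + t' *\<^sub>R d) < e"
      using e d by (simp add: t'_def dist_norm algebra_simps)
    then have "p + t' *\<^sub>R d \<in> K" using e by auto
    moreover have "t' \<ge> 0" using \<tau> e d T_def by (simp add: t'_def)
    ultimately have "t' \<le> \<tau>" using \<tau> T_def by auto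
    moreover have "e / (2 * norm d) > 0" using e d by simp
    ultimately show False by (simp add: t'_def)
  qed
  have "\<tau> \<noteq> 0" using notint p by auto
  moreover have "\<tau> \<ge> 0" "p + \<tau> *\<^sub>R d \<in> K" using \<tau>(1) T_def by auto
  moreover have "p + \<tau> *\<^sub>R d \<in> frontier K"
    using calculation(3) notint closure_subset unfolding frontier_def by blast
  ultimately have "\<tau> > 0" "p + \<tau> *\<^sub>R d \<in> frontier K" by auto
  then show ?thesis by blast
qed

lemma ray_exit_eq:
  fixes K :: "'a::euclidean_space set"
  assumes cv: "convex K" and p: "p \<in> interior K" and q: "q \<noteq> p"
    and z: "z \<in> frontier K" and t: "t \<ge> 0" and zt: "z = p + t *\<^sub>R (q - p)"
  shows "ray_exit K p q = z"
  unfolding ray_exit_def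
proof (rule the_equality)
  show "z \<in> frontier K \<and> (\<exists>t\<ge>0. z = p + t *\<^sub>R (q - p))" using z t zt by auto
next
  fix z' assume "z' \<in> frontier K \<and> (\<exists>t\<ge>0. z' = p + t *\<^sub>R (q - p))"
  then obtain t' where t': "t' \<ge> 0" "z' = p + t' *\<^sub>R (q - p)" "z' \<in> frontier K" by auto
  have qp: "q - p \<noteq> 0" using q by simp
  have "t' = t" using ray_unique[OF cv p qp t'(1) t] t' z zt by simp
  then show "z' = z" using zt t' by simp
qed

lemma ray_exit_gen:
  fixes K :: "'a::euclidean_space set"
  assumes cp: "compact K" and cv: "convex K" and p: "p \<in> interior K" and q: "q \<noteq> p"
  shows "\<exists>\<tau>>0. ray_exit K p q = p + \<tau> *\<^sub>R (q - p) \<and> p + \<tau> *\<^sub>R (q - p) \<in> frontier K"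
proof -
  have qp: "q - p \<noteq> 0" using q by simp
  obtain \<tau> where t: "\<tau> > 0" "p + \<tau> *\<^sub>R (q - p) \<in> frontier K" using ray_exists[OF cp cv p qp] by blast
  have "ray_exit K p q = p + \<tau> *\<^sub>R (q - p)"
    using ray_exit_eq[OF cv p q t(2), of \<tau>] t(1) by simp
  then show ?thesis using t by blast
qed

lemma ray_exit_int:
  fixes K :: "'a::euclidean_space set"
  assumes cp: "compact K" and cv: "convex K" and p: "p \<in> interior K" and q: "q \<in> interior K" and qp: "q \<noteq> p"
  shows "\<exists>\<tau>>1. ray_exit K p q = p + \<tau> *\<^sub>R (q - p) \<and> p + \<tau> *\<^sub>R (q - p) \<in> frontier K"
proof -
  obtain \<tau> where \<tau>: "\<tau> > 0" "ray_exit K p q = p + \<tau> *\<^sub>R (q - p)" "p + \<tau> *\<^sub>R (q - p) \<in> frontier K"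
    using ray_exit_gen[OF cp cv p qp] by auto
  have "\<tau> > 1"
  proof (rule ccontr)
    assume "\<not> \<tau> > 1"
    then have "\<tau> \<le> 1" by simp
    have qf: "q \<in> closure K" using q interior_subset closure_subset by blast
    have "p + \<tau> *\<^sub>R (q - p) \<in> interior K"
    proof (cases "\<tau> = 1")
      case True then show ?thesis using q by simp
    next
      case False
      have eq: "p + \<tau> *\<^sub>R (q - p) = (1 - \<tau>) *\<^sub>R p + \<tau> *\<^sub>R q" by (simp add: algebra_simps)
      have "\<tau> < 1" using False \<open>\<tau> \<le> 1\<close> by simp
      then have "p + \<tau> *\<^sub>R (q - p) \<in> open_segment p q"
        using \<tau>(1) qp eq unfolding in_segment(2) by metis
      then show ?thesis using in_interior_closure_convex_segment[OF cv p qf] by blast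
    qed
    then show False using \<tau> by (simp add: frontier_def)
  qed
  then show ?thesis using \<tau> by auto
qed



lemma funk_bound:
  fixes K :: "'a::euclidean_space set"
  assumes cp: "compact K" and cv: "convex K" and y: "y \<in> interior K" and z: "z \<in> interior K"
    and yz: "z \<noteq> y" and hK: "\<forall>v\<in>K. 0 \<le> c + m \<bullet> v" and hz: "0 < c + m \<bullet> z"
  shows "(c + m \<bullet> y) / (c + m \<bullet> z) \<le> norm (y - ray_exit K y z) / norm (z - ray_exit K y z)"
proof -
  obtain \<tau> where t: "\<tau> > 1" "ray_exit K y z = y + \<tau> *\<^sub>R (z - y)" "y + \<tau> *\<^sub>R (z - y) \<in> frontier K"
    using ray_exit_int[OF cp cv y z yz] by blast
  have "y + \<tau> *\<^sub>R (z - y) \<in> K"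
    using t(3) frontier_subset_closed[OF compact_imp_closed[OF cp]] by blast
  then have "0 \<le> c + m \<bullet> (y + \<tau> *\<^sub>R (z - y))" using hK by blast
  then have h1: "0 \<le> c + m \<bullet> y + \<tau> * (m \<bullet> (z - y))" by (simp add: inner_add_right add.assoc)
  have hz': "c + m \<bullet> z = c + m \<bullet> y + m \<bullet> (z - y)" by (simp add: inner_diff_right)
  define N where "N = norm (z - y)"
  have N: "N > 0" using yz N_def by simp
  have n1: "norm (y - ray_exit K y z) = \<tau> * N"
  proof -
    have "y - ray_exit K y z = (-\<tau>) *\<^sub>R (z - y)" using t(2) by simp
    then show ?thesis using t(1) N_def by simp
  qed
  have n2: "norm (z - ray_exit K y z) = (\<tau> - 1) * N"
  proof -
    have "z - ray_exit K y z = (1 - \<tau>) *\<^sub>R (z - y)" using t(2) by (simp add: algebra_simps)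
    then show ?thesis using t(1) N_def by simp
  qed
  have r: "norm (y - ray_exit K y z) / norm (z - ray_exit K y z) = \<tau> / (\<tau> - 1)"
    using n1 n2 N by simp
  have "(c + m \<bullet> y) * (\<tau> - 1) \<le> \<tau> * (c + m \<bullet> z)"
    using h1 hz' by (simp add: algebra_simps)
  then have "(c + m \<bullet> y) / (c + m \<bullet> z) \<le> \<tau> / (\<tau> - 1)"
    using hz t(1) by (simp add: divide_simps mult.commute)
  then show ?thesis using r by simp
qed

lemma hilbert_sym: "hilbert_dist K x y = hilbert_dist K y x"
  unfolding hilbert_dist_def Let_def by (simp add: mult.commute eq_commute)

lemma hilbert_lower:
  fixes K :: "'a::euclidean_space set"
  assumes cp: "compact K" and cv: "convex K" and y: "y \<in> interior K" and z: "z \<in> interior K"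
    and yz: "y \<noteq> z"
    and hK: "\<forall>v\<in>K. 0 \<le> ch + mh \<bullet> v" and hz: "0 < ch + mh \<bullet> z" and hy: "0 < ch + mh \<bullet> y"
    and gK: "\<forall>v\<in>K. 0 \<le> cg + mg \<bullet> v" and gz: "0 < cg + mg \<bullet> z" and gy: "0 < cg + mg \<bullet> y"
  shows "(1/2) * ln ((ch + mh \<bullet> y) / (ch + mh \<bullet> z) * ((cg + mg \<bullet> z) / (cg + mg \<bullet> y)))
         \<le> hilbert_dist K y z"
proof -
  have A: "(ch + mh \<bullet> y) / (ch + mh \<bullet> z) \<le> norm (y - ray_exit K y z) / norm (z - ray_exit K y z)"
    using funk_bound[OF cp cv y z _ hK hz] yz by simp
  have B: "(cg + mg \<bullet> z) / (cg + mg \<bullet> y) \<le> norm (z - ray_exit K z y) / norm (y - ray_exit K z y)"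
    using funk_bound[OF cp cv z y _ gK gy] yz by simp
  have p1: "0 < (ch + mh \<bullet> y) / (ch + mh \<bullet> z)" using hy hz by simp
  have p2: "0 < (cg + mg \<bullet> z) / (cg + mg \<bullet> y)" using gy gz by simp
  have "(ch + mh \<bullet> y) / (ch + mh \<bullet> z) * ((cg + mg \<bullet> z) / (cg + mg \<bullet> y))
     \<le> (norm (z - ray_exit K z y) / norm (y - ray_exit K z y)) * (norm (y - ray_exit K y z) / norm (z - ray_exit K y z))"
    using mult_mono[OF A B] p1 p2 A by (simp add: mult.commute)
  moreover have "0 < (ch + mh \<bullet> y) / (ch + mh \<bullet> z) * ((cg + mg \<bullet> z) / (cg + mg \<bullet> y))"
    using mult_pos_pos[OF p1 p2] .
  ultimately have "ln ((ch + mh \<bullet> y) / (ch + mh \<bullet> z) * ((cg + mg \<bullet> z) / (cg + mg \<bullet> y)))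
     \<le> ln ((norm (z - ray_exit K z y) / norm (y - ray_exit K z y)) * (norm (y - ray_exit K y z) / norm (z - ray_exit K y z)))"
    by (rule ln_mono)
  then show ?thesis unfolding hilbert_dist_def Let_def using yz by simp
qed

lemma affine_zero_frontier:
  fixes K :: "'a::euclidean_space set"
  assumes cl: "closed K" and hK: "\<forall>v\<in>K. 0 \<le> c + m \<bullet> v" and x: "x \<in> K" and hx: "0 < c + m \<bullet> x"
    and z0: "z0 \<in> K" and hz0: "c + m \<bullet> z0 \<le> 0"
  shows "z0 \<in> frontier K"
proof -
  have "z0 \<notin> interior K"
  proof
    assume "z0 \<in> interior K"
    then obtain e where e: "e > 0" "ball z0 e \<subseteq> K" using mem_interior by blast
    show False
    proof (cases "m = 0")
      case True then show ?thesis using hx hz0 by simp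
    next
      case False
      define z1 where "z1 = z0 - (e / (2 * norm m)) *\<^sub>R m"
      have "dist z0 z1 < e" using e False by (simp add: z1_def dist_norm)
      then have "z1 \<in> K" using e by auto
      then have "0 \<le> c + m \<bullet> z1" using hK by blast
      moreover have "m \<bullet> z1 = m \<bullet> z0 - (e / (2 * norm m)) * (norm m)^2"
        by (simp add: z1_def inner_diff_right power2_norm_eq_inner)
      moreover have "(e / (2 * norm m)) * (norm m)^2 > 0" using e False by simp
      ultimately show False using hz0 by linarith
    qed
  qed
  then show ?thesis using z0 closure_subset unfolding frontier_def by blast
qed

lemma hilbert_nonneg:
  fixes K :: "'a::euclidean_space set"
  assumes cp: "compact K" and cv: "convex K" and y: "y \<in> interior K" and w: "w \<in> K"
  shows "0 \<le> hilbert_dist K y w"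
proof (cases "w = y")
  case True then show ?thesis by (simp add: hilbert_dist_def)
next
  case False
  show ?thesis
  proof (cases "w \<in> interior K")
    case True
    have "(1/2) * ln ((1 + 0 \<bullet> y) / (1 + 0 \<bullet> w) * ((1 + 0 \<bullet> w) / (1 + 0 \<bullet> y))) \<le> hilbert_dist K y w"
      by (rule hilbert_lower[OF cp cv y True]) (use False in auto)
    then show ?thesis by simp
  next
    case False2: False
    then have wf: "w \<in> frontier K" using w closure_subset unfolding frontier_def by blast
    have "ray_exit K y w = w" using ray_exit_eq[OF cv y False wf, of 1] by simp
    then show ?thesis unfolding hilbert_dist_def Let_def using False by simp
  qed
qed



lemma cone_comb:
  fixes K :: "'a::euclidean_space set"
  assumes cv: "convex K" and x: "x \<in> K" and r1: "0 \<le> r1" and r2: "0 \<le> r2"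
    and u1: "x + u1 \<in> K" and u2: "x + u2 \<in> K" and a: "0 \<le> a" and b: "0 \<le> b"
  shows "\<exists>u. x + u \<in> K \<and> (a * r1 + b * r2) *\<^sub>R u = a *\<^sub>R (r1 *\<^sub>R u1) + b *\<^sub>R (r2 *\<^sub>R u2)"
proof (cases "a * r1 + b * r2 = 0")
  case True
  then have "a * r1 = 0" "b * r2 = 0" using a b r1 r2 by (smt (verit) mult_nonneg_nonneg)+
  then have "a *\<^sub>R (r1 *\<^sub>R u1) + b *\<^sub>R (r2 *\<^sub>R u2) = 0" by (simp only: scaleR_scaleR) simp
  then show ?thesis using True x by (intro exI[of _ 0]) simp
next
  case False
  define S where "S = a * r1 + b * r2"
  have S: "S > 0" using False a b r1 r2 S_def by (smt (verit) mult_nonneg_nonneg)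
  define u where "u = ((a * r1) / S) *\<^sub>R u1 + ((b * r2) / S) *\<^sub>R u2"
  have w: "(a * r1) / S + (b * r2) / S = 1" using S S_def by (simp add: add_divide_distrib[symmetric])
  have "x + u = ((a * r1) / S) *\<^sub>R (x + u1) + ((b * r2) / S) *\<^sub>R (x + u2)"
  proof -
    have "((a * r1) / S) *\<^sub>R (x + u1) + ((b * r2) / S) *\<^sub>R (x + u2)
       = ((a * r1) / S + (b * r2) / S) *\<^sub>R x + u" by (simp add: u_def algebra_simps)
    then show ?thesis using w by simp
  qed
  moreover have "0 \<le> (a * r1) / S" "0 \<le> (b * r2) / S" using a b r1 r2 S by simp_all
  ultimately have "x + u \<in> K" using cv u1 u2 w unfolding convex_def by metis
  moreover have "S *\<^sub>R u = a *\<^sub>R (r1 *\<^sub>R u1) + b *\<^sub>R (r2 *\<^sub>R u2)"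
    using S by (simp add: u_def scaleR_add_right)
  ultimately show ?thesis using S_def by blast
qed



lemma chord_max:
  fixes K :: "'a::euclidean_space set"
  assumes cp: "compact K" and cv: "convex K" and x: "x \<in> interior K" and n: "n \<noteq> 0"
  shows "\<exists>M l0 u0 u0'. M > 0 \<and> 0 \<le> l0 \<and> l0 \<le> 1 \<and> x + u0 \<in> K \<and> x + u0' \<in> K
     \<and> l0 *\<^sub>R u0 + (1 - l0) *\<^sub>R u0' = 0 \<and> n \<bullet> (l0 *\<^sub>R u0) = M
     \<and> (\<forall>s r u u'. 0 \<le> s \<longrightarrow> 0 \<le> r \<longrightarrow> x + u \<in> K \<longrightarrow> x + u' \<in> K \<longrightarrow> s *\<^sub>R u + r *\<^sub>R u' = 0
            \<longrightarrow> n \<bullet> (s *\<^sub>R u) \<le> M * (s + r))"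
proof -
  define S where "S = (\<lambda>v. v - x) ` K"
  have Siff: "u \<in> S \<longleftrightarrow> x + u \<in> K" for u
  proof
    assume "u \<in> S" then obtain v where "v \<in> K" "u = v - x" using S_def by blast
    then show "x + u \<in> K" by simp
  next
    assume "x + u \<in> K" then have "(x + u) - x \<in> S" unfolding S_def by (rule imageI)
    then show "u \<in> S" by simp
  qed
  have cS: "compact S" unfolding S_def by (intro compact_continuous_image cp) (intro continuous_intros)
  define f :: "real \<times> 'a \<times> 'a \<Rightarrow> 'a" where "f = (\<lambda>t. fst t *\<^sub>R fst (snd t) + (1 - fst t) *\<^sub>R snd (snd t))"
  define T where "T = ({0..1} \<times> S \<times> S) \<inter> {t. f t = 0}"
  have "closed {t. f t = 0}"
    by (rule closed_Collect_eq) (auto simp: f_def intro!: continuous_intros)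
  then have cT: "compact T" unfolding T_def
    by (intro compact_Int_closed compact_Times cS compact_Icc)
  obtain ep where ep: "ep > 0" "ball x ep \<subseteq> K" using x mem_interior by blast
  define v where "v = (ep / (2 * norm n)) *\<^sub>R n"
  have nv: "norm v < ep" using ep n by (simp add: v_def)
  have v1: "x + v \<in> K" using ep nv by (auto simp: dist_norm intro!: subsetD[OF ep(2)])
  have v2: "x + (- v) \<in> K" using ep nv by (auto simp: dist_norm intro!: subsetD[OF ep(2)])
  have vT: "(1/2, v, -v) \<in> T" unfolding T_def f_def using v1 v2 Siff by auto
  define F :: "real \<times> 'a \<times> 'a \<Rightarrow> real" where "F = (\<lambda>t. n \<bullet> (fst t *\<^sub>R fst (snd t)))"
  have "continuous_on T F" unfolding F_def by (intro continuous_intros)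
  then obtain tm where tm: "tm \<in> T" "\<And>t. t \<in> T \<Longrightarrow> F t \<le> F tm"
    using continuous_attains_sup[OF cT _] vT by blast
  obtain l0 u0 u0' where tmd: "tm = (l0, u0, u0')" by (metis prod.exhaust)
  define M where "M = F tm"
  have Fv: "F (1/2, v, -v) > 0"
  proof -
    have "F (1/2, v, -v) = (1/2) * (ep / (2 * norm n)) * (n \<bullet> n)" by (simp add: F_def v_def)
    moreover have "n \<bullet> n > 0" using n by simp
    ultimately show ?thesis using ep n by simp
  qed
  have M: "M > 0" using tm(2)[OF vT] Fv M_def by linarith
  have l0: "0 \<le> l0" "l0 \<le> 1" and u0: "x + u0 \<in> K" "x + u0' \<in> K" and eq0: "l0 *\<^sub>R u0 + (1 - l0) *\<^sub>R u0' = 0"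
    using tm(1) tmd Siff unfolding T_def f_def by auto
  have Mv: "n \<bullet> (l0 *\<^sub>R u0) = M" using M_def tmd F_def by simp
  have Cmax: "n \<bullet> (s *\<^sub>R u) \<le> M * (s + r)"
    if s: "0 \<le> s" and r: "0 \<le> r" and u: "x + u \<in> K" and u': "x + u' \<in> K" and su: "s *\<^sub>R u + r *\<^sub>R u' = 0" for s r u u'
  proof (cases "s + r = 0")
    case True then have "s = 0" using s r by linarith
    then show ?thesis using True by simp
  next
    case False
    then have sr: "s + r > 0" using s r by linarith
    define l where "l = s / (s + r)"
    have "1 - l = r / (s + r)" using sr by (simp add: l_def field_simps)
    then have "l *\<^sub>R u + (1 - l) *\<^sub>R u' = (1 / (s + r)) *\<^sub>R (s *\<^sub>R u + r *\<^sub>R u')"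
      by (simp add: l_def scaleR_add_right)
    then have "f (l, u, u') = 0" using su by (simp add: f_def)
    moreover have "0 \<le> l" "l \<le> 1" using s r sr by (simp_all add: l_def)
    ultimately have "(l, u, u') \<in> T" unfolding T_def using Siff u u' by auto
    then have "F (l, u, u') \<le> M" using tm(2) M_def by blast
    then have "(s / (s + r)) * (n \<bullet> u) \<le> M" by (simp add: F_def l_def)
    then have "s * (n \<bullet> u) \<le> M * (s + r)" using sr by (simp add: field_simps)
    then show ?thesis by simp
  qed
  show ?thesis using M l0 u0 eq0 Mv Cmax by blast
qed



lemma chord_exists:
  fixes K :: "'a::euclidean_space set"
  assumes cp: "compact K" and cv: "convex K" and x: "x \<in> interior K" and n: "n \<noteq> 0"
  shows "\<exists>e p q ch mh cg mg. e \<noteq> 0 \<and> p > 0 \<and> q > 0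
     \<and> x - p *\<^sub>R e \<in> frontier K \<and> x + q *\<^sub>R e \<in> frontier K
     \<and> (\<forall>v\<in>K. 0 \<le> ch + mh \<bullet> v) \<and> (\<forall>v\<in>K. 0 \<le> cg + mg \<bullet> v)
     \<and> (\<forall>s. ch + mh \<bullet> (x + s *\<^sub>R e) = 1 + s / p) \<and> (\<forall>s. cg + mg \<bullet> (x + s *\<^sub>R e) = 1 - s / q)
     \<and> (\<forall>z. n \<bullet> z \<le> n \<bullet> x \<longrightarrow> ch + mh \<bullet> z \<le> cg + mg \<bullet> z)"
proof -
  obtain M l0 u0 u0' where M: "M > 0" and l0: "0 \<le> l0" "l0 \<le> 1" and u0: "x + u0 \<in> K" "x + u0' \<in> K"
    and eq0: "l0 *\<^sub>R u0 + (1 - l0) *\<^sub>R u0' = 0" and Mv: "n \<bullet> (l0 *\<^sub>R u0) = M"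
    and Cmax: "\<And>s r u u'. 0 \<le> s \<Longrightarrow> 0 \<le> r \<Longrightarrow> x + u \<in> K \<Longrightarrow> x + u' \<in> K \<Longrightarrow> s *\<^sub>R u + r *\<^sub>R u' = 0
            \<Longrightarrow> n \<bullet> (s *\<^sub>R u) \<le> M * (s + r)"
    using chord_max[OF cp cv x n] by metis
  have xK: "x \<in> K" using x interior_subset by blast
  define S1 :: "('a \<times> real) set" where "S1 = {(s *\<^sub>R u, s) | s u. 0 \<le> s \<and> x + u \<in> K}"
  define S2 :: "('a \<times> real) set" where
    "S2 = {(-(r *\<^sub>R u), t) | r u t. 0 \<le> r \<and> x + u \<in> K \<and> t < n \<bullet> (-(r *\<^sub>R u)) / M - r}"
  have cS1: "convex S1"
    unfolding convex_def
  proof (intro ballI allI impI)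
    fix y1 y2 :: "'a \<times> real" and a b :: real
    assume y1: "y1 \<in> S1" and y2: "y2 \<in> S1" and ab: "0 \<le> a" "0 \<le> b" "a + b = 1"
    obtain s1 w1 where 1: "y1 = (s1 *\<^sub>R w1, s1)" "0 \<le> s1" "x + w1 \<in> K" using y1 S1_def by blast
    obtain s2 w2 where 2: "y2 = (s2 *\<^sub>R w2, s2)" "0 \<le> s2" "x + w2 \<in> K" using y2 S1_def by blast
    obtain w where w: "x + w \<in> K" "(a * s1 + b * s2) *\<^sub>R w = a *\<^sub>R (s1 *\<^sub>R w1) + b *\<^sub>R (s2 *\<^sub>R w2)"
      using cone_comb[OF cv xK 1(2) 2(2) 1(3) 2(3) ab(1,2)] by blast
    have "a *\<^sub>R y1 + b *\<^sub>R y2 = ((a * s1 + b * s2) *\<^sub>R w, a * s1 + b * s2)"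
      using 1 2 w by simp
    moreover have "0 \<le> a * s1 + b * s2" using ab 1 2 by simp
    ultimately show "a *\<^sub>R y1 + b *\<^sub>R y2 \<in> S1" unfolding S1_def using w by blast
  qed
  have cS2: "convex S2"
    unfolding convex_def
  proof (intro ballI allI impI)
    fix y1 y2 :: "'a \<times> real" and a b :: real
    assume y1: "y1 \<in> S2" and y2: "y2 \<in> S2" and ab: "0 \<le> a" "0 \<le> b" "a + b = 1"
    obtain s1 w1 t1 where 1: "y1 = (-(s1 *\<^sub>R w1), t1)" "0 \<le> s1" "x + w1 \<in> K"
      "t1 < n \<bullet> (-(s1 *\<^sub>R w1)) / M - s1" using y1 S2_def by blast
    obtain s2 w2 t2 where 2: "y2 = (-(s2 *\<^sub>R w2), t2)" "0 \<le> s2" "x + w2 \<in> K"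
      "t2 < n \<bullet> (-(s2 *\<^sub>R w2)) / M - s2" using y2 S2_def by blast
    obtain w where w: "x + w \<in> K" "(a * s1 + b * s2) *\<^sub>R w = a *\<^sub>R (s1 *\<^sub>R w1) + b *\<^sub>R (s2 *\<^sub>R w2)"
      using cone_comb[OF cv xK 1(2) 2(2) 1(3) 2(3) ab(1,2)] by blast
    have e1: "a *\<^sub>R y1 + b *\<^sub>R y2 = (-((a * s1 + b * s2) *\<^sub>R w), a * t1 + b * t2)"
      using 1 2 w by simp
    have "a * t1 + b * t2 < a * (n \<bullet> (-(s1 *\<^sub>R w1)) / M - s1) + b * (n \<bullet> (-(s2 *\<^sub>R w2)) / M - s2)"
    proof (cases "a = 0")
      case True then show ?thesis using ab 2 by simp
    next
      case False then have "a > 0" using ab by simp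
      then have "a * t1 < a * (n \<bullet> (-(s1 *\<^sub>R w1)) / M - s1)" using 1 by simp
      moreover have "b * t2 \<le> b * (n \<bullet> (-(s2 *\<^sub>R w2)) / M - s2)" using 2 ab by (simp add: mult_left_mono)
      ultimately show ?thesis by linarith
    qed
    also have "\<dots> = n \<bullet> (-(a *\<^sub>R (s1 *\<^sub>R w1) + b *\<^sub>R (s2 *\<^sub>R w2))) / M - (a * s1 + b * s2)"
      by (simp add: inner_add_right inner_minus_right algebra_simps add_divide_distrib diff_divide_distrib)
    also have "\<dots> = n \<bullet> (-((a * s1 + b * s2) *\<^sub>R w)) / M - (a * s1 + b * s2)" using w by simp
    finally have "a * t1 + b * t2 < n \<bullet> (-((a * s1 + b * s2) *\<^sub>R w)) / M - (a * s1 + b * s2)" .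
    moreover have "0 \<le> a * s1 + b * s2" using ab 1 2 by simp
    ultimately show "a *\<^sub>R y1 + b *\<^sub>R y2 \<in> S2" unfolding S2_def using w e1 by blast
  qed
  have ne1: "(0, 0) \<in> S1"
  proof -
    have "(0 *\<^sub>R (0::'a), 0::real) \<in> S1" unfolding S1_def using xK by (intro CollectI exI[of _ 0] exI[of _ "0::'a"] conjI) auto
    then show ?thesis by simp
  qed
  have ne2: "(0, t) \<in> S2" if "t < 0" for t
  proof -
    have "(-(0 *\<^sub>R (0::'a)), t) \<in> S2" unfolding S2_def using xK that by (intro CollectI exI[of _ 0] exI[of _ "0::'a"] exI[of _ t] conjI) auto
    then show ?thesis by simp
  qed
  have disj: "S1 \<inter> S2 = {}"
  proof (rule ccontr)
    assume "S1 \<inter> S2 \<noteq> {}"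
    then obtain y where y1: "y \<in> S1" and y2: "y \<in> S2" by blast
    obtain s w1 where 1: "y = (s *\<^sub>R w1, s)" "0 \<le> s" "x + w1 \<in> K" using y1 S1_def by blast
    obtain r w2 t where 2: "y = (-(r *\<^sub>R w2), t)" "0 \<le> r" "x + w2 \<in> K"
      "t < n \<bullet> (-(r *\<^sub>R w2)) / M - r" using y2 S2_def by blast
    have sw: "s *\<^sub>R w1 = -(r *\<^sub>R w2)" and st: "s = t" using 1 2 by auto
    have "s *\<^sub>R w1 + r *\<^sub>R w2 = 0" using sw by simp
    then have "n \<bullet> (s *\<^sub>R w1) \<le> M * (s + r)" using Cmax 1 2 by blast
    moreover have "s < n \<bullet> (s *\<^sub>R w1) / M - r" using 2(4) sw st by simp
    ultimately show False using M by (simp add: field_simps)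
  qed
  obtain a \<beta> where a: "a \<noteq> 0" and sep1: "\<forall>y\<in>S1. inner a y \<le> \<beta>" and sep2: "\<forall>y\<in>S2. inner a y \<ge> \<beta>"
    using separating_hyperplane_sets[OF cS1 cS2 _ _ disj] ne1 ne2[of "-1"] by fastforce
  define c where "c = fst a"
  define k where "k = snd a"
  have A: "c \<bullet> (s *\<^sub>R u) + k * s \<le> \<beta>" if "0 \<le> s" "x + u \<in> K" for s u
  proof -
    have "(s *\<^sub>R u, s) \<in> S1" unfolding S1_def using that by blast
    then show ?thesis using sep1 c_def k_def by (cases a) auto
  qed
  have B: "c \<bullet> (-(r *\<^sub>R u)) + k * t \<ge> \<beta>" if "0 \<le> r" "x + u \<in> K" "t < n \<bullet> (-(r *\<^sub>R u)) / M - r" for r u t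
  proof -
    have "(-(r *\<^sub>R u), t) \<in> S2" unfolding S2_def using that by blast
    then show ?thesis using sep2 c_def k_def by (cases a) auto
  qed
  have b0: "0 \<le> \<beta>" using A[of 0 0] xK by simp
  have B0: "k * t \<ge> \<beta>" if "t < 0" for t using B[of 0 0 t] xK that by simp
  have k0: "k \<le> 0" using B0[of "-1"] b0 by simp
  have bz: "\<beta> = 0"
  proof (rule ccontr)
    assume "\<beta> \<noteq> 0" then have bp: "\<beta> > 0" using b0 by simp
    then have kn: "k < 0" using B0[of "-1"] by simp
    have "\<beta> / (2 * k) < 0" using bp kn by (simp add: divide_pos_neg)
    then have "k * (\<beta> / (2 * k)) \<ge> \<beta>" using B0 by blast
    then show False using kn bp by simp
  qed
  have kn: "k < 0"
  proof (rule ccontr)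
    assume "\<not> k < 0" then have k: "k = 0" using k0 by simp
    then have c: "c \<noteq> 0" using a c_def k_def by (cases a) (auto simp: zero_prod_def)
    obtain ep where ep: "ep > 0" "ball x ep \<subseteq> K" using x mem_interior by blast
    define v where "v = (ep / (2 * norm c)) *\<^sub>R c"
    have nv: "norm v < ep" using ep c by (simp add: v_def)
    have v1: "x + v \<in> K" using ep nv by (auto simp: dist_norm intro!: subsetD[OF ep(2)])
    have "c \<bullet> (1 *\<^sub>R v) + k * 1 \<le> \<beta>" by (rule A[OF _ v1]) simp
    then have "(ep / (2 * norm c)) * (c \<bullet> c) \<le> 0" using k bz by (simp add: v_def)
    moreover have "c \<bullet> c > 0" using c by simp
    moreover have "ep / (2 * norm c) > 0" using ep c by simp
    ultimately show False by (smt (verit) mult_pos_pos)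
  qed
  define th1 where "th1 = (1 / (-k)) *\<^sub>R c"
  have th1v: "th1 \<bullet> v = (c \<bullet> v) / (-k)" for v by (simp add: th1_def)
  have I1: "th1 \<bullet> (s *\<^sub>R u) \<le> s" if "0 \<le> s" "x + u \<in> K" for s u
  proof -
    have "c \<bullet> (s *\<^sub>R u) \<le> - k * s" using A[OF that] bz by simp
    then have X: "c \<bullet> (s *\<^sub>R u) \<le> s * (-k)" by (simp add: mult.commute)
    have kp: "-k > 0" using kn by simp
    have "(c \<bullet> (s *\<^sub>R u)) / (-k) \<le> s" using pos_divide_le_eq[OF kp] X by blast
    then show ?thesis by (simp add: th1v)
  qed
  have I2: "th1 \<bullet> (-(r *\<^sub>R u)) \<ge> n \<bullet> (-(r *\<^sub>R u)) / M - r" if "0 \<le> r" "x + u \<in> K" for r u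
  proof (rule dense_le)
    fix t assume "t < n \<bullet> (-(r *\<^sub>R u)) / M - r"
    then have "c \<bullet> (-(r *\<^sub>R u)) + k * t \<ge> 0" using B[OF that] bz by simp
    then have "t * (-k) \<le> c \<bullet> (-(r *\<^sub>R u))" by (simp add: algebra_simps)
    moreover have kp: "-k > 0" using kn by simp
    ultimately have "t \<le> (c \<bullet> (-(r *\<^sub>R u))) / (-k)" using pos_le_divide_eq[OF kp] by blast
    then show "t \<le> th1 \<bullet> (-(r *\<^sub>R u))" by (simp only: th1v)
  qed
  define th2 where "th2 = (1 / M) *\<^sub>R n - th1"
  define w0 where "w0 = l0 *\<^sub>R u0"
  have w0': "w0 = -((1 - l0) *\<^sub>R u0')" using eq0 w0_def by (simp add: eq_neg_iff_add_eq_0)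
  have nw0: "n \<bullet> w0 = M" using Mv w0_def by simp
  have tw0a: "th1 \<bullet> w0 \<le> l0" using I1[OF l0(1) u0(1)] w0_def by simp
  have tw0b: "th1 \<bullet> w0 \<ge> l0"
  proof -
    have "th1 \<bullet> w0 \<ge> n \<bullet> w0 / M - (1 - l0)" using I2[OF _ u0(2), of "1 - l0"] l0 w0' by simp
    then show ?thesis using nw0 M by simp
  qed
  have tw0: "th1 \<bullet> w0 = l0" using tw0a tw0b by simp
  have w0nz: "w0 \<noteq> 0" using nw0 M by auto
  have l0p: "0 < l0" using w0nz w0_def l0 by (cases "l0 = 0") auto
  have l0l: "l0 < 1"
  proof (rule ccontr)
    assume "\<not> l0 < 1" then have "l0 = 1" using l0 by simp
    then have "w0 = 0" using w0' by simp
    then show False using w0nz by simp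
  qed
  define p where "p = 1 / (1 - l0)"
  define q where "q = 1 / l0"
  define cg where "cg = 1 + th1 \<bullet> x"
  define mg where "mg = - th1"
  define ch where "ch = 1 - th2 \<bullet> x"
  define mh where "mh = th2"
  have gdef: "cg + mg \<bullet> z = 1 - th1 \<bullet> (z - x)" for z by (simp add: cg_def mg_def inner_diff_right)
  have hdef: "ch + mh \<bullet> z = 1 + th2 \<bullet> (z - x)" for z by (simp add: ch_def mh_def inner_diff_right)
  have gK: "\<forall>v\<in>K. 0 \<le> cg + mg \<bullet> v"
  proof
    fix v assume v: "v \<in> K"
    have "th1 \<bullet> (1 *\<^sub>R (v - x)) \<le> 1" by (rule I1) (use v in auto)
    then show "0 \<le> cg + mg \<bullet> v" using gdef by simp
  qed
  have hK: "\<forall>v\<in>K. 0 \<le> ch + mh \<bullet> v"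
  proof
    fix v assume v: "v \<in> K"
    have "th1 \<bullet> (-(1 *\<^sub>R (v - x))) \<ge> n \<bullet> (-(1 *\<^sub>R (v - x))) / M - 1" by (rule I2) (use v in auto)
    then have 1: "n \<bullet> (x - v) / M - 1 \<le> th1 \<bullet> (x - v)" by simp
    have "th1 \<bullet> (x - v) = -(th1 \<bullet> (v - x))" "n \<bullet> (x - v) / M = -(n \<bullet> (v - x) / M)"
      by (simp add: inner_diff_right, simp add: inner_diff_right diff_divide_distrib)
    then have "th1 \<bullet> (v - x) \<le> n \<bullet> (v - x) / M + 1" using 1 by linarith
    moreover have "th2 \<bullet> (v - x) = n \<bullet> (v - x) / M - th1 \<bullet> (v - x)" by (simp add: th2_def inner_diff_left)
    ultimately show "0 \<le> ch + mh \<bullet> v" using hdef by simp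
  qed
  have gline: "\<forall>s. cg + mg \<bullet> (x + s *\<^sub>R w0) = 1 - s / q"
    using gdef tw0 q_def by simp
  have th2w0: "th2 \<bullet> w0 = 1 - l0" using nw0 tw0 M by (simp add: th2_def inner_diff_left)
  have hline: "\<forall>s. ch + mh \<bullet> (x + s *\<^sub>R w0) = 1 + s / p"
    using hdef th2w0 p_def by simp
  have hg: "\<forall>z. n \<bullet> z \<le> n \<bullet> x \<longrightarrow> ch + mh \<bullet> z \<le> cg + mg \<bullet> z"
  proof (intro allI impI)
    fix z assume z: "n \<bullet> z \<le> n \<bullet> x"
    have "th2 \<bullet> (z - x) + th1 \<bullet> (z - x) = n \<bullet> (z - x) / M" by (simp add: th2_def inner_diff_left)
    moreover have "n \<bullet> (z - x) / M \<le> 0" using z M by (simp add: inner_diff_right divide_le_0_iff)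
    ultimately show "ch + mh \<bullet> z \<le> cg + mg \<bullet> z" using gdef hdef by simp
  qed
  have pp: "p > 0" "q > 0" using l0p l0l p_def q_def by simp_all
  have bpt: "x + q *\<^sub>R w0 = x + u0" using l0p q_def w0_def by simp
  have apt: "x - p *\<^sub>R w0 = x + u0'" using l0l p_def w0' by simp
  have xpos: "0 < cg + mg \<bullet> x" "0 < ch + mh \<bullet> x" using gdef hdef by simp_all
  have bf: "x + q *\<^sub>R w0 \<in> frontier K"
  proof -
    have "cg + mg \<bullet> (x + q *\<^sub>R w0) \<le> 0" using gline pp by simp
    moreover have "x + q *\<^sub>R w0 \<in> K" using bpt u0(1) by metis
    ultimately show ?thesis using affine_zero_frontier[OF compact_imp_closed[OF cp] gK xK xpos(1)] by blast
  qed
  have af: "x - p *\<^sub>R w0 \<in> frontier K"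
  proof -
    have "ch + mh \<bullet> (x + (-p) *\<^sub>R w0) = 1 + (-p) / p" using hline by blast
    then have "ch + mh \<bullet> (x + (-p) *\<^sub>R w0) \<le> 0" using pp by simp
    then have "ch + mh \<bullet> (x - p *\<^sub>R w0) \<le> 0" by simp
    moreover have "x - p *\<^sub>R w0 \<in> K" using apt u0(2) by metis
    ultimately show ?thesis using affine_zero_frontier[OF compact_imp_closed[OF cp] hK xK xpos(2)] by blast
  qed
  show ?thesis
    by (rule exI[of _ w0], rule exI[of _ p], rule exI[of _ q], rule exI[of _ ch], rule exI[of _ mh],
        rule exI[of _ cg], rule exI[of _ mg]) (use w0nz pp af bf hK gK hline gline hg in blast)
qed



lemma chord_point:
  fixes K :: "'a::euclidean_space set"
  assumes cp: "compact K" and cv: "convex K" and x: "x \<in> interior K" and e: "e \<noteq> 0"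
    and p: "p > 0" and q: "q > 0" and af: "x - p *\<^sub>R e \<in> frontier K" and bf: "x + q *\<^sub>R e \<in> frontier K"
    and s: "0 < s" "s < q"
  shows "x + s *\<^sub>R e \<in> interior K \<and> hilbert_dist K x (x + s *\<^sub>R e) = (1/2) * ln ((s + p) * q / (p * (q - s)))"
proof -
  define y where "y = x + s *\<^sub>R e"
  define b where "b = x + q *\<^sub>R e"
  define a where "a = x - p *\<^sub>R e"
  have bcl: "b \<in> closure K" using bf b_def frontier_def by blast
  have xb: "x \<noteq> b" using e q b_def by simp
  have yeq: "y = (1 - s/q) *\<^sub>R x + (s/q) *\<^sub>R b" using q by (simp add: y_def b_def algebra_simps)
  have "0 < s/q" "s/q < 1" using s q by simp_all
  then have "y \<in> open_segment x b" unfolding in_segment(2) using xb yeq by blast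
  then have yK: "y \<in> interior K" using in_interior_closure_convex_segment[OF cv x bcl] by blast
  have xy: "y \<noteq> x" using e s y_def by simp
  have r1: "ray_exit K x y = b"
  proof (rule ray_exit_eq[OF cv x xy])
    show "b \<in> frontier K" using bf b_def by simp
    show "0 \<le> q / s" using q s by simp
    show "b = x + (q / s) *\<^sub>R (y - x)" using s by (simp add: y_def b_def)
  qed
  have yx: "x \<noteq> y" using xy by simp
  have r2: "ray_exit K y x = a"
  proof (rule ray_exit_eq[OF cv yK yx])
    show "a \<in> frontier K" using af a_def by simp
    show "0 \<le> (s + p) / s" using p s by simp
    have "((s + p) / s) *\<^sub>R (x - y) = - ((s + p) *\<^sub>R e)" using s by (simp add: y_def)
    then show "a = y + ((s + p) / s) *\<^sub>R (x - y)" by (simp add: a_def y_def algebra_simps)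
  qed
  have n1: "norm (y - a) = (s + p) * norm e"
  proof -
    have "y - a = (s + p) *\<^sub>R e" by (simp add: y_def a_def algebra_simps)
    then show ?thesis using s p by simp
  qed
  have n2: "norm (x - a) = p * norm e" using p by (simp add: a_def)
  have n3: "norm (x - b) = q * norm e" using q by (simp add: b_def)
  have n4: "norm (y - b) = (q - s) * norm e"
  proof -
    have "y - b = (-(q - s)) *\<^sub>R e" by (simp add: y_def b_def algebra_simps)
    then show ?thesis using s by simp
  qed
  have ne: "norm e > 0" using e by simp
  have "norm (y - a) / norm (x - a) * (norm (x - b) / norm (y - b)) = (s + p) * q / (p * (q - s))"
    using n1 n2 n3 n4 ne by simp
  then have "hilbert_dist K x y = (1/2) * ln ((s + p) * q / (p * (q - s)))"
    unfolding hilbert_dist_def Let_def using r1 r2 yx by simp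
  then show ?thesis using yK y_def by simp
qed

lemma chord_lower:
  fixes K :: "'a::euclidean_space set"
  assumes cp: "compact K" and cv: "convex K" and x: "x \<in> interior K" and e: "e \<noteq> 0"
    and p: "p > 0" and q: "q > 0"
    and hK: "\<forall>v\<in>K. 0 \<le> ch + mh \<bullet> v" and gK: "\<forall>v\<in>K. 0 \<le> cg + mg \<bullet> v"
    and hl: "\<forall>s. ch + mh \<bullet> (x + s *\<^sub>R e) = 1 + s / p" and gl: "\<forall>s. cg + mg \<bullet> (x + s *\<^sub>R e) = 1 - s / q"
    and hg: "\<forall>z\<in>G. ch + mh \<bullet> z \<le> cg + mg \<bullet> z" and GK: "G \<subseteq> interior K"
    and yK: "x + s *\<^sub>R e \<in> interior K" and s: "0 < s" "s < q" and z: "z \<in> G"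
  shows "(1/2) * ln ((s + p) * q / (p * (q - s))) \<le> hilbert_dist K (x + s *\<^sub>R e) z"
proof -
  define y where "y = x + s *\<^sub>R e"
  have cl: "closed K" using cp compact_imp_closed by blast
  have xK: "x \<in> K" using x interior_subset by blast
  have zK: "z \<in> interior K" using z GK by blast
  have hx: "0 < ch + mh \<bullet> x" using hl[rule_format, of 0] by simp
  have gx: "0 < cg + mg \<bullet> x" using gl[rule_format, of 0] by simp
  have hz: "0 < ch + mh \<bullet> z"
  proof (rule ccontr)
    assume "\<not> 0 < ch + mh \<bullet> z"
    then have "z \<in> frontier K" using affine_zero_frontier[OF cl hK xK hx] zK interior_subset by force
    then show False using zK by (simp add: frontier_def)
  qed
  have gz: "0 < cg + mg \<bullet> z"
  proof (rule ccontr)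
    assume "\<not> 0 < cg + mg \<bullet> z"
    then have "z \<in> frontier K" using affine_zero_frontier[OF cl gK xK gx] zK interior_subset by force
    then show False using zK by (simp add: frontier_def)
  qed
  have hy: "ch + mh \<bullet> y = 1 + s / p" using hl y_def by simp
  have gy: "cg + mg \<bullet> y = 1 - s / q" using gl y_def by simp
  have hyp: "0 < ch + mh \<bullet> y" using hy s p by (simp add: add_pos_pos)
  have gyp: "0 < cg + mg \<bullet> y" using gy s q by simp
  have yz: "y \<noteq> z"
  proof
    assume "y = z"
    then have "ch + mh \<bullet> y \<le> cg + mg \<bullet> y" using hg z by blast
    moreover have "s / p > 0" "s / q > 0" using s p q by simp_all
    ultimately show False using hy gy by linarith
  qed
  have L: "(1/2) * ln ((ch + mh \<bullet> y) / (ch + mh \<bullet> z) * ((cg + mg \<bullet> z) / (cg + mg \<bullet> y))) \<le> hilbert_dist K y z"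
    using hilbert_lower[OF cp cv _ zK yz hK hz hyp gK gz gyp] yK y_def by simp
  have "(ch + mh \<bullet> y) / (cg + mg \<bullet> y) \<le> (ch + mh \<bullet> y) / (ch + mh \<bullet> z) * ((cg + mg \<bullet> z) / (cg + mg \<bullet> y))"
  proof -
    have "ch + mh \<bullet> z \<le> cg + mg \<bullet> z" using hg z by blast
    then have "1 \<le> (cg + mg \<bullet> z) / (ch + mh \<bullet> z)" using hz by simp
    moreover have "0 < (ch + mh \<bullet> y) / (cg + mg \<bullet> y)" using hyp gyp by simp
    ultimately have "(ch + mh \<bullet> y) / (cg + mg \<bullet> y) * 1 \<le> (ch + mh \<bullet> y) / (cg + mg \<bullet> y) * ((cg + mg \<bullet> z) / (ch + mh \<bullet> z))"
      by (intro mult_left_mono) simp_all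
    then show ?thesis by (simp add: field_simps)
  qed
  moreover have "(ch + mh \<bullet> y) / (cg + mg \<bullet> y) = (s + p) * q / (p * (q - s))"
  proof -
    have "(ch + mh \<bullet> y) / (cg + mg \<bullet> y) = (1 + s / p) / (1 - s / q)" using hy gy by simp
    also have "\<dots> = (s + p) * q / (p * (q - s))"
    proof -
      have "q - s \<noteq> 0" using s by simp
      then show ?thesis using p q by (simp add: field_simps)
    qed
    finally show ?thesis .
  qed
  moreover have "0 < (s + p) * q / (p * (q - s))" using p q s by simp
  ultimately have "ln ((s + p) * q / (p * (q - s))) \<le> ln ((ch + mh \<bullet> y) / (ch + mh \<bullet> z) * ((cg + mg \<bullet> z) / (cg + mg \<bullet> y)))"
    by (intro ln_mono) simp_all
  then show ?thesis using L y_def by simp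
qed



lemma half_lt: "(a::real) < b \<Longrightarrow> m \<le> (b - a) / 2 \<Longrightarrow> a + m < b" by (simp add: field_simps)

lemma part1:
  fixes K G :: "'a::euclidean_space set" and \<alpha> :: real
  assumes "convex_body K" and "convex_body G" and GK: "G \<subseteq> interior K"
    and al: "0 < \<alpha>"
  shows "\<forall>x\<in>frontier G. \<exists>y\<in>frontier (hilbert_nbhd K G \<alpha>). hilbert_dist K x y = \<alpha>"
proof
  fix x assume xf: "x \<in> frontier G"
  have cp: "compact K" and cv: "convex K" using assms(1) convex_body_def by auto
  have cpG: "compact G" and cvG: "convex G" and iG: "interior G \<noteq> {}" using assms(2) convex_body_def by auto
  have xG: "x \<in> G" using xf frontier_subset_closed[OF compact_imp_closed[OF cpG]] by blast
  have x: "x \<in> interior K" using xG GK by blast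
  have xcl: "x \<in> closure G" using xG closure_subset by blast
  have xnr: "x \<notin> rel_interior G" using xf rel_interior_nonempty_interior[OF iG] by (simp add: frontier_def)
  obtain a where a: "a \<noteq> 0" "\<And>y. y \<in> closure G \<Longrightarrow> a \<bullet> x \<le> a \<bullet> y"
    using supporting_hyperplane_relative_frontier[OF cvG xcl xnr] by metis
  define n where "n = - a"
  have n: "n \<noteq> 0" using a n_def by simp
  have nG: "\<forall>z\<in>G. n \<bullet> z \<le> n \<bullet> x" using a(2) closure_subset n_def by fastforce
  obtain e p q ch mh cg mg where e: "e \<noteq> 0" and p: "p > 0" and q: "q > 0"
    and af: "x - p *\<^sub>R e \<in> frontier K" and bf: "x + q *\<^sub>R e \<in> frontier K"
    and hK: "\<forall>v\<in>K. 0 \<le> ch + mh \<bullet> v" and gK: "\<forall>v\<in>K. 0 \<le> cg + mg \<bullet> v"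
    and hl: "\<forall>s. ch + mh \<bullet> (x + s *\<^sub>R e) = 1 + s / p" and gl: "\<forall>s. cg + mg \<bullet> (x + s *\<^sub>R e) = 1 - s / q"
    and hg0: "\<forall>z. n \<bullet> z \<le> n \<bullet> x \<longrightarrow> ch + mh \<bullet> z \<le> cg + mg \<bullet> z"
    using chord_exists[OF cp cv x n] by blast
  have hg: "\<forall>z\<in>G. ch + mh \<bullet> z \<le> cg + mg \<bullet> z" using hg0 nG by blast
  define Dv where "Dv = (\<lambda>s::real. (1/2) * ln ((s + p) * q / (p * (q - s))))"
  have INFeq: "x + s *\<^sub>R e \<in> interior K \<and> (INF z\<in>G. hilbert_dist K (x + s *\<^sub>R e) z) = Dv s
      \<and> hilbert_dist K x (x + s *\<^sub>R e) = Dv s" if s: "0 < s" "s < q" for s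
  proof -
    have cpt: "x + s *\<^sub>R e \<in> interior K" and dd: "hilbert_dist K x (x + s *\<^sub>R e) = Dv s"
      using chord_point[OF cp cv x e p q af bf s] Dv_def by auto
    have low: "\<And>z. z \<in> G \<Longrightarrow> Dv s \<le> hilbert_dist K (x + s *\<^sub>R e) z"
      using chord_lower[OF cp cv x e p q hK gK hl gl hg GK cpt s] Dv_def by blast
    have dx: "hilbert_dist K (x + s *\<^sub>R e) x = Dv s" using dd hilbert_sym by metis
    have "Inf ((\<lambda>z. hilbert_dist K (x + s *\<^sub>R e) z) ` G) = Dv s"
    proof (rule cInf_eq_minimum)
      show "Dv s \<in> (\<lambda>z. hilbert_dist K (x + s *\<^sub>R e) z) ` G" using xG dx by force
      show "\<And>w. w \<in> (\<lambda>z. hilbert_dist K (x + s *\<^sub>R e) z) ` G \<Longrightarrow> Dv s \<le> w" using low by blast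
    qed
    then show ?thesis using cpt dd by simp
  qed
  define E where "E = exp (2 * \<alpha>)"
  have E1: "E > 1" using al E_def by simp
  define t where "t = p * q * (E - 1) / (q + E * p)"
  have den: "q + E * p > 0" using q p E1 by (simp add: add_pos_pos)
  have t0: "0 < t" using p q E1 den t_def by simp
  have tq: "t < q"
  proof -
    have "q * (q + E * p) - p * q * (E - 1) = q * (q + p)" by (simp add: algebra_simps)
    moreover have "q * (q + p) > 0" using p q by simp
    ultimately have "p * q * (E - 1) < q * (q + E * p)" by linarith
    then show ?thesis using den t_def by (simp add: divide_less_eq)
  qed
  have ratio: "(t + p) * q / (p * (q - t)) = E"
  proof -
    have tt: "t * (q + E * p) = p * q * (E - 1)" using den t_def by simp
    have key: "(t + p) * q = E * (p * (q - t))"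
    proof -
      have "(t + p) * q - E * (p * (q - t)) = t * (q + E * p) - p * q * (E - 1)" by (simp add: algebra_simps)
      then show ?thesis using tt by simp
    qed
    have nz: "p * (q - t) \<noteq> 0" using p tq by simp
    have "(t + p) * q / (p * (q - t)) = E * (p * (q - t)) / (p * (q - t))" by (simp only: key)
    also have "\<dots> = E" using nz by simp
    finally show ?thesis .
  qed
  have Dt: "Dv t = \<alpha>" using ratio E_def Dv_def by simp
  have Dmono: "Dv t < Dv s" if ts: "t < s" "s < q" for s
  proof -
    have qt: "q - t > 0" and qs: "q - s > 0" using ts tq by simp_all
    have "(t + p) / (q - t) < (s + p) / (q - t)" using qt ts by (simp add: divide_strict_right_mono)
    also have "\<dots> \<le> (s + p) / (q - s)" using qt qs ts p t0
      by (intro divide_left_mono) simp_all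
    finally have f: "(t + p) / (q - t) < (s + p) / (q - s)" .
    have qp: "q / p > 0" using p q by simp
    have e1: "(t + p) * q / (p * (q - t)) = (q / p) * ((t + p) / (q - t))" by simp
    have e2: "(s + p) * q / (p * (q - s)) = (q / p) * ((s + p) / (q - s))" by simp
    have "(t + p) * q / (p * (q - t)) < (s + p) * q / (p * (q - s))"
      unfolding e1 e2 using mult_strict_left_mono[OF f qp] .
    moreover have "0 < (t + p) * q / (p * (q - t))" using t0 tq p q by simp
    ultimately show ?thesis unfolding Dv_def by simp
  qed
  define y where "y = x + t *\<^sub>R e"
  have yi: "y \<in> interior K" "(INF z\<in>G. hilbert_dist K y z) = \<alpha>" "hilbert_dist K x y = \<alpha>"
    using INFeq[OF t0 tq] Dt y_def by auto
  have yN: "y \<in> hilbert_nbhd K G \<alpha>" unfolding hilbert_nbhd_def using yi by simp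
  have notin: "x + s *\<^sub>R e \<notin> hilbert_nbhd K G \<alpha>" if "t < s" "s < q" for s
  proof -
    have "(INF z\<in>G. hilbert_dist K (x + s *\<^sub>R e) z) = Dv s" using INFeq[of s] that t0 by simp
    then show ?thesis unfolding hilbert_nbhd_def using Dmono[OF that] Dt by simp
  qed
  have "y \<notin> interior (hilbert_nbhd K G \<alpha>)"
  proof
    assume "y \<in> interior (hilbert_nbhd K G \<alpha>)"
    then obtain ep where ep: "ep > 0" "ball y ep \<subseteq> hilbert_nbhd K G \<alpha>" using mem_interior by blast
    define s where "s = t + min (ep / (2 * norm e)) ((q - t) / 2)"
    have ne: "norm e > 0" using e by simp
    have d1: "ep / (2 * norm e) > 0" using ep ne by simp
    have d2: "(q - t) / 2 > 0" using tq by simp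
    have st: "t < s" using d1 d2 s_def by simp
    have "min (ep / (2 * norm e)) ((q - t) / 2) \<le> (q - t) / 2" by (rule min.cobounded2)
    then have sq: "s < q" using half_lt[OF tq] unfolding s_def by blast
    have "dist y (x + s *\<^sub>R e) = (s - t) * norm e"
    proof -
      have "y - (x + s *\<^sub>R e) = (t - s) *\<^sub>R e" by (simp add: y_def algebra_simps)
      then show ?thesis using st by (simp add: dist_norm)
    qed
    also have "\<dots> \<le> (ep / (2 * norm e)) * norm e" using s_def ne by (intro mult_right_mono) simp_all
    also have "\<dots> < ep" using ne ep by simp
    finally have "x + s *\<^sub>R e \<in> ball y ep" by simp
    then show False using ep notin[OF st sq] by blast
  qed
  then have "y \<in> frontier (hilbert_nbhd K G \<alpha>)" using yN closure_subset unfolding frontier_def by blast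
  then show "\<exists>y\<in>frontier (hilbert_nbhd K G \<alpha>). hilbert_dist K x y = \<alpha>" using yi by blast
qed

theorem lemma8p4:
  fixes K G :: "'a::euclidean_space set" and \<alpha> :: real
  assumes "convex_body K" and "convex_body G" and "G \<subseteq> interior K"
    and "0 < \<alpha>" and "\<alpha> \<le> 1"
  shows "(\<forall>x\<in>frontier G. \<exists>y\<in>frontier (hilbert_nbhd K G \<alpha>). hilbert_dist K x y = \<alpha>)
       \<and> frontier G \<subseteq> {z. (INF w\<in>frontier (hilbert_nbhd K G \<alpha>). hilbert_dist K z w) \<le> \<alpha>}"
proof
  show P1: "\<forall>x\<in>frontier G. \<exists>y\<in>frontier (hilbert_nbhd K G \<alpha>). hilbert_dist K x y = \<alpha>"
    using part1[OF assms(1-4)] .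
  show "frontier G \<subseteq> {z. (INF w\<in>frontier (hilbert_nbhd K G \<alpha>). hilbert_dist K z w) \<le> \<alpha>}"
  proof
    fix z assume zf: "z \<in> frontier G"
    have cp: "compact K" and cv: "convex K" using assms(1) convex_body_def by auto
    have cpG: "compact G" using assms(2) convex_body_def by auto
    have zG: "z \<in> G" using zf frontier_subset_closed[OF compact_imp_closed[OF cpG]] by blast
    have zK: "z \<in> interior K" using zG assms(3) by blast
    obtain y where y: "y \<in> frontier (hilbert_nbhd K G \<alpha>)" "hilbert_dist K z y = \<alpha>" using P1 zf by blast
    have sub: "frontier (hilbert_nbhd K G \<alpha>) \<subseteq> K"
    proof -
      have "hilbert_nbhd K G \<alpha> \<subseteq> K" unfolding hilbert_nbhd_def using interior_subset by blast
      then have "closure (hilbert_nbhd K G \<alpha>) \<subseteq> K"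
        using closure_minimal compact_imp_closed[OF cp] by blast
      then show ?thesis unfolding frontier_def by blast
    qed
    have bdd: "bdd_below ((\<lambda>w. hilbert_dist K z w) ` frontier (hilbert_nbhd K G \<alpha>))"
    proof (rule bdd_belowI[of _ 0])
      fix v assume "v \<in> (\<lambda>w. hilbert_dist K z w) ` frontier (hilbert_nbhd K G \<alpha>)"
      then obtain w where "w \<in> frontier (hilbert_nbhd K G \<alpha>)" "v = hilbert_dist K z w" by blast
      then show "0 \<le> v" using hilbert_nonneg[OF cp cv zK] sub by blast
    qed
    have "(INF w\<in>frontier (hilbert_nbhd K G \<alpha>). hilbert_dist K z w) \<le> hilbert_dist K z y"
      using cInf_lower[OF _ bdd] y(1) by blast
    then show "z \<in> {z. (INF w\<in>frontier (hilbert_nbhd K G \<alpha>). hilbert_dist K z w) \<le> \<alpha>}" using y(2) by simp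
  qed
qed

end
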